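(* Let $a$ and $q \geq 1$ be integers with $\gcd(a,q) = 1$. Let $n, k, L$ be positive integers and $N \geq 1$ a real number such that $$L \leq N^n, \qquad q \leq L N^k, \qquad 2^{n+k+1} < N.$$ Let $\mathcal{P}$ be the set of primes in $[N/2, N]$ not dividing $q$. Let $m \leq n$ be a positive integer and let $r_1, \dots, r_m$ be positive integers with $r_1 + \cdots + r_m = n$. Then $$\sum_{l = 1}^{L} \left| \sum_{q_1 \in \mathcal{P}} \cdots \sum_{q_m \in \mathcal{P}} e\!\left(\frac{l\, q_1^{r_1} \cdots q_m^{r_m}\, a}{q}\right) \right| \leq C\, 2^{n+k} n^n \max\!\left(L N^{n/2 + k/2},\ \frac{L N^n}{q^{1/2}}\right),$$ where $C>0$ is an absolute constant.
   Context: $e(x) := e^{2\pi i x}$. *)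

theory Defs
  imports "HOL-Analysis.Analysis"
begin

definition e :: "real \<Rightarrow> complex" where
  "e x = exp (2 * of_real pi * \<i> * of_real x)"

end

theory Submission
  imports Defs "HOL-Computational_Algebra.Primes"
begin



lemma e_add: "e (x + y) = e x * e y"
  unfolding e_def by (simp add: distrib_left exp_add)

lemma e_norm [simp]: "norm (e x) = 1"
proof -
  have "2 * of_real pi * \<i> * of_real x = \<i> * of_real (2*pi*x)" by simp
  then show ?thesis unfolding e_def by (metis norm_exp_i_times)
qed

lemma e_cnj: "cnj (e x) = e (- x)"
  unfolding e_def by (simp add: exp_cnj)

lemma e_nat_mult: "e (real h * x) = e x ^ h"
proof -
  have "2 * of_real pi * \<i> * of_real (real h * x) = of_nat h * (2 * of_real pi * \<i> * of_real x)" by simp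
  then show ?thesis unfolding e_def by (simp only: exp_of_nat_mult)
qed

lemma e_int: "e (of_int z) = 1"
  unfolding e_def exp_eq_1 by (auto intro!: exI[of _ z])

lemma e_eq_1: "e x = 1 \<Longrightarrow> x \<in> \<int>"
proof -
  assume "e x = 1"
  then obtain n::int where "2 * pi * x = of_int (2*n) * pi" unfolding e_def exp_eq_1 by auto
  then have "x = of_int n" by simp
  then show ?thesis by simp
qed

lemma orth:
  fixes z q :: int and K :: nat
  assumes q: "q \<ge> 1"
  shows "(\<Sum>h=1..K * nat q. e (real h * real_of_int z / real_of_int q)) = (if q dvd z then of_nat (K * nat q) else 0)"
proof (cases "q dvd z")
  case True
  then obtain w where w: "z = q * w" by auto
  have "\<And>h. e (real h * real_of_int z / real_of_int q) = 1"
  proof -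
    fix h :: nat
    have "real h * real_of_int z / real_of_int q = of_int (int h * w)" using q by (simp add: w)
    then show "e (real h * real_of_int z / real_of_int q) = 1" by (metis e_int)
  qed
  then show ?thesis using True by simp
next
  case False
  define w where "w = e (real_of_int z / real_of_int q)"
  have w1: "w \<noteq> 1"
  proof
    assume "w = 1"
    then have "real_of_int z / real_of_int q \<in> \<int>" unfolding w_def by (rule e_eq_1)
    then obtain c where c: "real_of_int z / real_of_int q = of_int c" by (auto elim: Ints_cases)
    then have "real_of_int z = real_of_int (q * c)" using q by (simp add: field_simps)
    then have "z = q * c" by linarith
    then show False using False by auto
  qed
  have wq: "w ^ nat q = 1"
  proof -
    have "w ^ nat q = e (real (nat q) * (real_of_int z / real_of_int q))" unfolding w_def by (simp only: e_nat_mult)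
    also have "real (nat q) * (real_of_int z / real_of_int q) = of_int z" using q by simp
    finally show ?thesis by (simp add: e_int)
  qed
  have "(\<Sum>h=1..K * nat q. e (real h * real_of_int z / real_of_int q)) = (\<Sum>h=1..K * nat q. w ^ h)"
    unfolding w_def by (intro sum.cong refl) (simp add: e_nat_mult[symmetric] times_divide_eq_right)
  also have "\<dots> = w * (\<Sum>h<K * nat q. w ^ h)"
  proof -
    have "(\<Sum>h=1..K * nat q. w ^ h) = (\<Sum>h<K * nat q. w ^ Suc h)"
      by (rule sum.reindex_bij_witness[of _ Suc "\<lambda>h. h - 1"]) auto
    then show ?thesis by (simp add: sum_distrib_left)
  qed
  also have "(\<Sum>h<K * nat q. w ^ h) = 0"
    using w1 by (simp add: geometric_sum power_mult wq mult.commute[of K])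
  finally show ?thesis using False by simp
qed



lemma completion:
  fixes X :: "'a set" and x :: "'a \<Rightarrow> int" and a q :: int and H :: nat
  assumes fin: "finite X" and q: "q \<ge> 1" and cop: "coprime a q"
  shows "(\<Sum>h=1..H. (norm (\<Sum>t\<in>X. e (real h * real_of_int (x t) * real_of_int a / real_of_int q)))^2)
     \<le> (real H + real_of_int q) * real (card {p \<in> X \<times> X. q dvd x (fst p) - x (snd p)})"
proof -
  define F where "F h = (\<Sum>t\<in>X. e (real h * real_of_int (x t) * real_of_int a / real_of_int q))" for h :: nat
  define K where "K = H div nat q + 1"
  define Q where "Q = {p \<in> X \<times> X. q dvd x (fst p) - x (snd p)}"
  have KqH: "H \<le> K * nat q"
  proof -
    have "H mod nat q < nat q" using q by simp
    moreover have "H div nat q * nat q + H mod nat q = H" by (rule div_mult_mod_eq)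
    ultimately show ?thesis unfolding K_def distrib_right by linarith
  qed
  have KqH2: "real (K * nat q) \<le> real H + real_of_int q"
  proof -
    have "(H div nat q) * nat q \<le> H" by (rule div_times_less_eq_dividend)
    then have "K * nat q \<le> H + nat q" unfolding K_def by simp
    then show ?thesis using q by linarith
  qed
  have sq: "complex_of_real ((norm (F h))^2) = (\<Sum>p\<in>X\<times>X. e (real h * real_of_int ((x (fst p) - x (snd p)) * a) / real_of_int q))" for h
  proof -
    have "complex_of_real ((norm (F h))^2) = F h * cnj (F h)" by (rule complex_norm_square)
    also have "\<dots> = (\<Sum>t\<in>X. \<Sum>t'\<in>X. e (real h * real_of_int (x t) * real_of_int a / real_of_int q) * cnj (e (real h * real_of_int (x t') * real_of_int a / real_of_int q)))"
      unfolding F_def by (simp add: sum_distrib_left sum_distrib_right cnj_sum) (rule sum.swap)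
    also have "\<dots> = (\<Sum>t\<in>X. \<Sum>t'\<in>X. e (real h * real_of_int ((x t - x t') * a) / real_of_int q))"
      by (intro sum.cong refl) (simp add: e_cnj e_add[symmetric] algebra_simps diff_divide_distrib)
    also have "\<dots> = (\<Sum>p\<in>X\<times>X. e (real h * real_of_int ((x (fst p) - x (snd p)) * a) / real_of_int q))"
      by (simp add: sum.cartesian_product split_def)
    finally show ?thesis .
  qed
  have "complex_of_real (\<Sum>h=1..K * nat q. (norm (F h))^2) = (\<Sum>h=1..K * nat q. \<Sum>p\<in>X\<times>X. e (real h * real_of_int ((x (fst p) - x (snd p)) * a) / real_of_int q))"
    unfolding of_real_sum by (intro sum.cong refl sq)
  also have "\<dots> = (\<Sum>p\<in>X\<times>X. \<Sum>h=1..K * nat q. e (real h * real_of_int ((x (fst p) - x (snd p)) * a) / real_of_int q))"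
    by (rule sum.swap)
  also have "\<dots> = (\<Sum>p\<in>X\<times>X. if q dvd (x (fst p) - x (snd p)) * a then of_nat (K * nat q) else 0)"
    by (intro sum.cong refl orth q)
  also have "\<dots> = (\<Sum>p\<in>X\<times>X. if q dvd (x (fst p) - x (snd p)) then of_nat (K * nat q) else 0)"
  proof (intro sum.cong refl)
    fix p
    have "q dvd (x (fst p) - x (snd p)) * a \<longleftrightarrow> q dvd (x (fst p) - x (snd p))"
      using cop by (metis coprime_commute coprime_dvd_mult_left_iff)
    then show "(if q dvd (x (fst p) - x (snd p)) * a then of_nat (K * nat q) else 0) = (if q dvd (x (fst p) - x (snd p)) then of_nat (K * nat q) else (0::complex))" by simp
  qed
  also have "\<dots> = of_nat (K * nat q) * of_nat (card Q)"
    unfolding Q_def using fin by (subst sum.inter_filter[symmetric]) auto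
  also have "\<dots> = complex_of_real (real (K * nat q) * real (card Q))" by simp
  finally have eq: "(\<Sum>h=1..K * nat q. (norm (F h))^2) = real (K * nat q) * real (card Q)"
    by (simp only: of_real_eq_iff)
  have "(\<Sum>h=1..H. (norm (F h))^2) \<le> (\<Sum>h=1..K * nat q. (norm (F h))^2)"
    by (rule sum_mono2) (use KqH in auto)
  also have "\<dots> \<le> (real H + real_of_int q) * real (card Q)"
    unfolding eq by (rule mult_right_mono[OF KqH2]) simp
  finally show ?thesis unfolding F_def Q_def .
qed



lemma card_res:
  fixes q :: int and c B :: nat
  assumes q: "q \<ge> 1"
  shows "card {v \<in> {0..B}. q dvd int c - int v} \<le> B div nat q + 1"
proof -
  let ?V = "{v \<in> {0..B}. q dvd int c - int v}"
  have inj: "inj_on (\<lambda>v. v div nat q) ?V"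
  proof (rule inj_onI)
    fix v w assume v: "v \<in> ?V" and w: "w \<in> ?V" and eq: "v div nat q = w div nat q"
    have "q dvd int v - int w"
    proof -
      have "q dvd (int c - int w) - (int c - int v)" by (rule dvd_diff) (use v w in auto)
      then show ?thesis by simp
    qed
    then have "int v mod q = int w mod q" by (simp add: mod_eq_dvd_iff)
    then have "int (v mod nat q) = int (w mod nat q)" using q by (simp add: of_nat_mod)
    then have "v mod nat q = w mod nat q" by simp
    then show "v = w" using eq by (metis div_mult_mod_eq)
  qed
  have "(\<lambda>v. v div nat q) ` ?V \<subseteq> {0..B div nat q}" by (auto intro: div_le_mono)
  then have "card ((\<lambda>v. v div nat q) ` ?V) \<le> B div nat q + 1"
    by (metis card_atLeastAtMost card_mono finite_atLeastAtMost minus_nat.diff_0 Suc_eq_plus1)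
  then show ?thesis using card_image[OF inj] by simp
qed

lemma cong_count:
  fixes X :: "'a set" and x :: "'a \<Rightarrow> nat" and q :: int and B \<mu> :: nat
  assumes fin: "finite X" and q: "q \<ge> 1" and xB: "\<forall>t\<in>X. x t \<le> B"
    and fib: "\<forall>v. card {t\<in>X. x t = v} \<le> \<mu>"
  shows "real (card {p \<in> X \<times> X. q dvd int (x (fst p)) - int (x (snd p))})
          \<le> real (card X) * real \<mu> * (real B / real_of_int q + 1)"
proof -
  define R where "R t = {t'\<in>X. q dvd int (x t) - int (x t')}" for t
  have Qeq: "{p \<in> X \<times> X. q dvd int (x (fst p)) - int (x (snd p))} = Sigma X R"
    unfolding R_def by auto
  have cardR: "real (card (R t)) \<le> real \<mu> * (real B / real_of_int q + 1)" for t
  proof -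
    let ?V = "{v \<in> {0..B}. q dvd int (x t) - int v}"
    have sub: "R t \<subseteq> (\<Union>v\<in>?V. {t'\<in>X. x t' = v})" unfolding R_def using xB by auto
    have "card (R t) \<le> card (\<Union>v\<in>?V. {t'\<in>X. x t' = v})"
      by (rule card_mono[OF _ sub]) (use fin in auto)
    also have "\<dots> \<le> (\<Sum>v\<in>?V. card {t'\<in>X. x t' = v})" by (rule card_UN_le) simp
    also have "\<dots> \<le> (\<Sum>v\<in>?V. \<mu>)" by (rule sum_mono) (use fib in auto)
    also have "\<dots> = card ?V * \<mu>" by simp
    also have "\<dots> \<le> (B div nat q + 1) * \<mu>" by (rule mult_right_mono[OF card_res[OF q]]) simp
    finally have "real (card (R t)) \<le> real ((B div nat q + 1) * \<mu>)" by linarith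
    also have "\<dots> = (real (B div nat q) + 1) * real \<mu>" by (simp add: algebra_simps)
    also have "\<dots> \<le> (real B / real_of_int q + 1) * real \<mu>"
    proof -
      have "real (B div nat q) = of_int \<lfloor>real B / real (nat q)\<rfloor>"
        by (metis floor_divide_of_nat_eq of_int_of_nat_eq)
      also have "\<dots> \<le> real B / real (nat q)" by (rule of_int_floor_le)
      also have "real (nat q) = real_of_int q" using q by simp
      finally show ?thesis by (intro mult_right_mono) auto
    qed
    finally show ?thesis by (simp add: mult.commute)
  qed
  have "real (card (Sigma X R)) = (\<Sum>t\<in>X. real (card (R t)))"
    using fin by (subst card_SigmaI) (auto simp: R_def)
  also have "\<dots> \<le> (\<Sum>t\<in>X. real \<mu> * (real B / real_of_int q + 1))" by (rule sum_mono) (rule cardR)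
  also have "\<dots> = real (card X) * real \<mu> * (real B / real_of_int q + 1)" by simp
  finally show ?thesis unfolding Qeq .
qed



lemma bilinear:
  fixes X :: "'a set" and Y :: "'b set" and x :: "'a \<Rightarrow> nat" and y :: "'b \<Rightarrow> nat"
    and a q :: int and L Bx By \<mu> \<rho> :: nat
  assumes finX: "finite X" and finY: "finite Y" and q: "q \<ge> 1" and cop: "coprime a q"
    and xB: "\<forall>t\<in>X. x t \<le> Bx" and yB: "\<forall>u\<in>Y. 1 \<le> y u \<and> y u \<le> By"
    and fibx: "\<forall>v. card {t\<in>X. x t = v} \<le> \<mu>"
    and fiby: "\<forall>h. card {p \<in> {1..L} \<times> Y. fst p * y (snd p) = h} \<le> \<rho>"
  shows "(\<Sum>l=1..L. norm (\<Sum>p\<in>X\<times>Y. e (real l * real (x (fst p) * y (snd p)) * real_of_int a / real_of_int q)))^2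
     \<le> real L * real (card Y) * real \<rho> * (real (L * By) + real_of_int q)
         * (real (card X) * real \<mu> * (real Bx / real_of_int q + 1))"
proof -
  define G where "G h = norm (\<Sum>t\<in>X. e (real h * real_of_int (int (x t)) * real_of_int a / real_of_int q))" for h :: nat
  define S where "S = {1..L} \<times> Y"
  define f where "f p = fst p * y (snd p)" for p :: "nat \<times> 'b"
  have finS: "finite S" unfolding S_def using finY by simp
  have G0: "G h \<ge> 0" for h unfolding G_def by simp
  have step1: "norm (\<Sum>p\<in>X\<times>Y. e (real l * real (x (fst p) * y (snd p)) * real_of_int a / real_of_int q))
      \<le> (\<Sum>u\<in>Y. G (l * y u))" for l
  proof -
    have "(\<Sum>p\<in>X\<times>Y. e (real l * real (x (fst p) * y (snd p)) * real_of_int a / real_of_int q))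
        = (\<Sum>u\<in>Y. \<Sum>t\<in>X. e (real (l * y u) * real_of_int (int (x t)) * real_of_int a / real_of_int q))"
    proof -
      have "(\<Sum>p\<in>X\<times>Y. e (real l * real (x (fst p) * y (snd p)) * real_of_int a / real_of_int q))
          = (\<Sum>t\<in>X. \<Sum>u\<in>Y. e (real l * real (x t * y u) * real_of_int a / real_of_int q))"
        by (simp add: sum.cartesian_product split_def)
      also have "\<dots> = (\<Sum>u\<in>Y. \<Sum>t\<in>X. e (real l * real (x t * y u) * real_of_int a / real_of_int q))"
        by (rule sum.swap)
      also have "\<dots> = (\<Sum>u\<in>Y. \<Sum>t\<in>X. e (real (l * y u) * real_of_int (int (x t)) * real_of_int a / real_of_int q))"
        by (intro sum.cong refl) (simp add: mult_ac)
      finally show ?thesis .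
    qed
    also have "norm \<dots> \<le> (\<Sum>u\<in>Y. G (l * y u))" unfolding G_def by (rule norm_sum)
    finally show ?thesis .
  qed
  have "(\<Sum>l=1..L. norm (\<Sum>p\<in>X\<times>Y. e (real l * real (x (fst p) * y (snd p)) * real_of_int a / real_of_int q)))
      \<le> (\<Sum>l=1..L. \<Sum>u\<in>Y. G (l * y u))" by (rule sum_mono) (rule step1)
  also have "\<dots> = (\<Sum>p\<in>S. G (f p))" unfolding S_def f_def by (simp add: sum.cartesian_product split_def)
  finally have le1: "(\<Sum>l=1..L. norm (\<Sum>p\<in>X\<times>Y. e (real l * real (x (fst p) * y (snd p)) * real_of_int a / real_of_int q)))
      \<le> (\<Sum>p\<in>S. G (f p))" .
  have "(\<Sum>p\<in>S. (G (f p))^2) = (\<Sum>h\<in>f ` S. \<Sum>p\<in>{p\<in>S. f p = h}. (G (f p))^2)"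
    by (rule sum.image_gen[OF finS])
  also have "\<dots> = (\<Sum>h\<in>f ` S. real (card {p\<in>S. f p = h}) * (G h)^2)"
    by (intro sum.cong refl) simp
  also have "\<dots> \<le> (\<Sum>h\<in>f ` S. real \<rho> * (G h)^2)"
    by (intro sum_mono mult_right_mono) (use fiby in \<open>auto simp: S_def f_def\<close>)
  also have "\<dots> \<le> (\<Sum>h=1..L*By. real \<rho> * (G h)^2)"
  proof (rule sum_mono2)
    show "f ` S \<subseteq> {1..L*By}"
    proof
      fix h assume "h \<in> f ` S"
      then obtain l u where l: "1 \<le> l" "l \<le> L" and u: "u \<in> Y" and h: "h = l * y u"
        unfolding S_def f_def by auto
      have "1 \<le> y u" "y u \<le> By" using yB u by auto
      then show "h \<in> {1..L*By}" using l h by (auto intro: mult_le_mono order.trans[OF _ mult_le_mono])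
    qed
  qed (auto simp: G0)
  also have "\<dots> = real \<rho> * (\<Sum>h=1..L*By. (G h)^2)" by (simp add: sum_distrib_left)
  also have "\<dots> \<le> real \<rho> * ((real (L*By) + real_of_int q) * real (card {p \<in> X \<times> X. q dvd int (x (fst p)) - int (x (snd p))}))"
    unfolding G_def by (intro mult_left_mono completion finX q cop) simp
  also have "\<dots> \<le> real \<rho> * ((real (L*By) + real_of_int q) * (real (card X) * real \<mu> * (real Bx / real_of_int q + 1)))"
    using q by (intro mult_left_mono cong_count finX xB fibx) auto
  finally have le2: "(\<Sum>p\<in>S. (G (f p))^2) \<le> real \<rho> * ((real (L*By) + real_of_int q) * (real (card X) * real \<mu> * (real Bx / real_of_int q + 1)))" .
  have cS: "card S = L * card Y" unfolding S_def by (simp add: card_cartesian_product)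
  have "(\<Sum>l=1..L. norm (\<Sum>p\<in>X\<times>Y. e (real l * real (x (fst p) * y (snd p)) * real_of_int a / real_of_int q)))^2
      \<le> (\<Sum>p\<in>S. G (f p))^2"
    by (rule power_mono[OF le1]) (simp add: sum_nonneg)
  also have "\<dots> \<le> (\<Sum>p\<in>S. (G (f p))^2) * real (card S)" by (rule sum_squared_le_sum_of_squares)
  also have "\<dots> \<le> real \<rho> * ((real (L*By) + real_of_int q) * (real (card X) * real \<mu> * (real Bx / real_of_int q + 1))) * real (card S)"
    by (rule mult_right_mono[OF le2]) simp
  finally show ?thesis unfolding cS by (simp add: mult_ac)
qed



lemma dvd_tuple_prod:
  fixes t :: "nat \<Rightarrow> nat"
  assumes "finite I" "i \<in> I" "r i > 0"
  shows "t i dvd (\<Prod>k\<in>I. t k ^ r k)"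
proof -
  have "t i dvd t i ^ r i" using assms(3) by (simp add: dvd_power)
  also have "t i ^ r i dvd (\<Prod>k\<in>I. t k ^ r k)" using assms by (intro dvd_prodI)
  finally show ?thesis .
qed

lemma prime_dvd_tuple:
  fixes t :: "nat \<Rightarrow> nat"
  assumes "finite I" "prime p" "p dvd (\<Prod>k\<in>I. t k ^ r k)" "\<forall>k\<in>I. prime (t k)"
  shows "\<exists>k\<in>I. p = t k"
proof -
  obtain k where k: "k \<in> I" "p dvd t k ^ r k" using prime_dvd_prod_iff[OF assms(1) assms(2)] assms(3) by auto
  then have "p dvd t k" using assms(2) prime_dvd_power by metis
  moreover have "prime (t k)" using assms(4) k(1) by auto
  ultimately have "p = t k" using primes_dvd_imp_eq assms(2) by metis
  then show ?thesis using k by blast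
qed

lemma prod_primes_dvd:
  fixes h :: nat
  assumes "finite D" "\<forall>p\<in>D. prime p \<and> p dvd h"
  shows "\<Prod>D dvd h"
  using assms
proof (induction D rule: finite_induct)
  case empty then show ?case by simp
next
  case (insert p D)
  have pp: "prime p" "p dvd h" using insert.prems by auto
  have IH: "\<Prod>D dvd h" using insert by auto
  have "\<not> p dvd \<Prod>D"
  proof
    assume "p dvd \<Prod>D"
    then obtain p' where "p' \<in> D" "p dvd p'" using prime_dvd_prod_iff[OF insert.hyps(1) pp(1), of id] by auto
    moreover have "prime p'" using \<open>p' \<in> D\<close> insert.prems by auto
    ultimately have "p = p'" using primes_dvd_imp_eq pp(1) by metis
    then show False using \<open>p' \<in> D\<close> insert.hyps(2) by simp
  qed
  then have "coprime p (\<Prod>D)" using pp(1) by (simp add: prime_imp_coprime)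
  then have "p * \<Prod>D dvd h" using pp(2) IH by (intro divides_mult)
  then show ?case using insert.hyps by simp
qed

lemma card_big_primes:
  fixes N :: real and h :: nat and D :: "nat set"
  assumes N: "N \<ge> 4" and fin: "finite D" and D: "\<forall>p\<in>D. prime p \<and> p dvd h \<and> N / 2 \<le> real p"
    and h: "h > 0" "real h \<le> N ^ (2*n)"
  shows "card D \<le> 4 * n"
proof (rule ccontr)
  assume "\<not> card D \<le> 4 * n"
  then have c: "4 * n + 1 \<le> card D" by simp
  have "(N/2) ^ card D = (\<Prod>p\<in>D. N/2)" by simp
  also have "\<dots> \<le> (\<Prod>p\<in>D. real p)" using D N by (intro prod_mono) auto
  also have "\<dots> = real (\<Prod>D)" by simp
  also have "\<dots> \<le> real h"
  proof -
    have "\<Prod>D dvd h" using prod_primes_dvd[OF fin] D by auto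
    then have "\<Prod>D \<le> h" using h(1) by (rule dvd_imp_le)
    then show ?thesis by (simp only: of_nat_le_iff)
  qed
  finally have A: "(N/2) ^ card D \<le> N ^ (2*n)" using h(2) by linarith
  have "(N/2) ^ (4*n+1) \<le> (N/2) ^ card D" using N c by (intro power_increasing) auto
  moreover have "N ^ (2*n) < (N/2) ^ (4*n+1)"
  proof -
    have "N * 4 \<le> N * N" using N by (intro mult_left_mono) auto
    then have "N \<le> (N/2)^2" by (simp add: power2_eq_square field_simps)
    then have "N ^ (2*n) \<le> ((N/2)^2) ^ (2*n)" using N by (intro power_mono) auto
    also have "\<dots> = (N/2) ^ (4*n)" by (simp add: power_mult[symmetric])
    also have "\<dots> < (N/2) ^ (4*n+1)" using N by (intro power_strict_increasing) auto
    finally show ?thesis .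
  qed
  ultimately show False using A by linarith
qed



lemma PiE_split_bij:
  fixes A :: "'b set" and j m :: nat
  assumes "j \<le> m"
  shows "bij_betw (\<lambda>p. (\<lambda>i. if i < j then fst p i else snd p i))
           (PiE {..<j} (\<lambda>_. A) \<times> PiE {j..<m} (\<lambda>_. A)) (PiE {..<m} (\<lambda>_. A))"
proof (rule bij_betwI[where g = "\<lambda>f. (restrict f {..<j}, restrict f {j..<m})"])
  show "(\<lambda>p. (\<lambda>i. if i < j then fst p i else snd p i)) \<in> PiE {..<j} (\<lambda>_. A) \<times> PiE {j..<m} (\<lambda>_. A) \<rightarrow> PiE {..<m} (\<lambda>_. A)"
    using assms by (auto simp: PiE_iff extensional_def)
  show "(\<lambda>f. (restrict f {..<j}, restrict f {j..<m})) \<in> PiE {..<m} (\<lambda>_. A) \<rightarrow> PiE {..<j} (\<lambda>_. A) \<times> PiE {j..<m} (\<lambda>_. A)"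
    using assms by (auto simp: PiE_iff)
  fix p assume p: "p \<in> PiE {..<j} (\<lambda>_. A) \<times> PiE {j..<m} (\<lambda>_. A)"
  obtain t u where pe: "p = (t, u)" by (cases p)
  have t: "t \<in> PiE {..<j} (\<lambda>_. A)" and u: "u \<in> PiE {j..<m} (\<lambda>_. A)" using p pe by auto
  have "restrict (\<lambda>i. if i < j then t i else u i) {..<j} = t"
    using t by (auto simp: restrict_def PiE_iff extensional_def)
  moreover have "restrict (\<lambda>i. if i < j then t i else u i) {j..<m} = u"
    using u by (auto simp: restrict_def PiE_iff extensional_def)
  ultimately show "(restrict (\<lambda>i. if i < j then fst p i else snd p i) {..<j}, restrict (\<lambda>i. if i < j then fst p i else snd p i) {j..<m}) = p"
    unfolding pe fst_conv snd_conv by simp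
next
  fix f assume f: "f \<in> PiE {..<m} (\<lambda>_. A)"
  show "(\<lambda>i. if i < j then fst (restrict f {..<j}, restrict f {j..<m}) i else snd (restrict f {..<j}, restrict f {j..<m}) i) = f"
  proof
    fix i show "(if i < j then fst (restrict f {..<j}, restrict f {j..<m}) i else snd (restrict f {..<j}, restrict f {j..<m}) i) = f i"
      using f assms by (auto simp: restrict_def PiE_iff extensional_def)
  qed
qed

lemma prod_split_merge:
  fixes t u :: "nat \<Rightarrow> nat" and r :: "nat \<Rightarrow> nat"
  assumes "j \<le> m"
  shows "(\<Prod>i<m. (if i < j then t i else u i) ^ r i) = (\<Prod>i<j. t i ^ r i) * (\<Prod>i\<in>{j..<m}. u i ^ r i)"
proof -
  have U: "{..<m} = {..<j} \<union> {j..<m}" using assms by auto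
  have "(\<Prod>i<m. (if i < j then t i else u i) ^ r i) = (\<Prod>i<j. (if i < j then t i else u i) ^ r i) * (\<Prod>i\<in>{j..<m}. (if i < j then t i else u i) ^ r i)"
    unfolding U by (rule prod.union_disjoint) auto
  also have "\<dots> = (\<Prod>i<j. t i ^ r i) * (\<Prod>i\<in>{j..<m}. u i ^ r i)"
    by (intro arg_cong2[where f = "(*)"] prod.cong) auto
  finally show ?thesis .
qed

lemma sum_split_r:
  fixes r :: "nat \<Rightarrow> nat"
  assumes "j \<le> m"
  shows "(\<Sum>i<m. r i) = (\<Sum>i<j. r i) + (\<Sum>i\<in>{j..<m}. r i)"
proof -
  have U: "{..<m} = {..<j} \<union> {j..<m}" using assms by auto
  show ?thesis unfolding U by (rule sum.union_disjoint) auto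
qed

lemma r_le:
  fixes r :: "nat \<Rightarrow> nat"
  assumes "i < m" "\<forall>i<m. 0 < r i"
  shows "r i + (m - 1) \<le> (\<Sum>i<m. r i)"
proof -
  have "(\<Sum>i<m. r i) = r i + (\<Sum>i\<in>{..<m} - {i}. r i)"
    using assms(1) by (subst sum.remove[of _ i]) auto
  moreover have "(\<Sum>i\<in>{..<m} - {i}. (1::nat)) \<le> (\<Sum>i\<in>{..<m} - {i}. r i)"
    using assms by (intro sum_mono) auto
  moreover have "(\<Sum>i\<in>{..<m} - {i}. (1::nat)) = m - 1" using assms(1) by simp
  ultimately show ?thesis by linarith
qed



lemma key:
  fixes N L q :: real and m n s k :: nat
  assumes N: "N \<ge> 1" and L: "L \<ge> 1" and q: "q \<ge> 1" and qL: "q \<le> L * N ^ k"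
    and mn: "m \<le> n" and sn: "s \<le> n" and ms: "m \<le> s + k" and cs: "s = 0 \<or> s + k \<le> n"
  shows "L * N ^ m * (L * N ^ (n - s) + q) * (N ^ s / q + 1)
     \<le> 4 * max (L^2 * N ^ (n + k)) (L^2 * N ^ (2*n) / q)"
proof -
  define M where "M = max (L^2 * N ^ (n + k)) (L^2 * N ^ (2*n) / q)"
  have M1: "L^2 * N ^ (n + k) \<le> M" and M2: "L^2 * N ^ (2*n) / q \<le> M" unfolding M_def by auto
  have pw: "\<And>a b. a \<le> b \<Longrightarrow> N ^ a \<le> N ^ b" using N by (intro power_increasing) auto
  have Npos: "N ^ i > 0" for i using N by simp
  have e: "L * N ^ m * (L * N ^ (n - s) + q) * (N ^ s / q + 1)
      = L^2 * N^(m + n) / q + L^2 * N^(m + (n - s)) + L * N^(m + s) + L * N^m * q"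
  proof -
    have "N ^ (n - s) * N ^ s = N ^ n" using sn by (simp flip: power_add)
    then show ?thesis using q by (simp add: field_simps power2_eq_square power_add)
  qed
  have t1: "L^2 * N^(m + n) / q \<le> M"
  proof -
    have "L^2 * N^(m + n) / q \<le> L^2 * N^(2*n) / q"
      using q mn by (intro divide_right_mono mult_left_mono pw) auto
    then show ?thesis using M2 by linarith
  qed
  have t2: "L^2 * N^(m + (n - s)) \<le> M"
  proof -
    have "L^2 * N^(m + (n - s)) \<le> L^2 * N^(n + k)" using ms sn by (intro mult_left_mono pw) auto
    then show ?thesis using M1 by linarith
  qed
  have t3: "L * N^(m + s) \<le> M"
    using cs
  proof
    assume "s = 0"
    have "L * N^(m + s) \<le> L^2 * N^(n + k)"
    proof -
      have "L * N^(m+s) \<le> L * N^(n+k)" using \<open>s = 0\<close> mn L by (intro mult_left_mono pw) auto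
      also have "\<dots> \<le> L^2 * N^(n+k)" using L N by (intro mult_right_mono) (auto simp: power2_eq_square)
      finally show ?thesis .
    qed
    then show ?thesis using M1 by linarith
  next
    assume sk: "s + k \<le> n"
    have "L * N^(m + s) * q \<le> L * N^(m+s) * (L * N^k)" using qL L N by (intro mult_left_mono) auto
    also have "\<dots> = L^2 * N^(m+s+k)" by (simp add: power_add power2_eq_square)
    also have "\<dots> \<le> L^2 * N^(2*n)" using sk mn by (intro mult_left_mono pw) auto
    finally have "L * N^(m + s) \<le> L^2 * N^(2*n) / q" using q by (simp add: field_simps)
    then show ?thesis using M2 by linarith
  qed
  have t4: "L * N^m * q \<le> M"
  proof -
    have "L * N^m * q \<le> L * N^m * (L * N^k)" using qL L N by (intro mult_left_mono) auto
    also have "\<dots> = L^2 * N^(m+k)" by (simp add: power_add power2_eq_square)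
    also have "\<dots> \<le> L^2 * N^(n+k)" using mn by (intro mult_left_mono pw) auto
    finally show ?thesis using M1 by linarith
  qed
  show ?thesis unfolding e M_def[symmetric] using t1 t2 t3 t4 by linarith
qed



lemma core:
  fixes a q :: int and n k L m :: nat and N :: real and r :: "nat \<Rightarrow> nat"
  assumes q: "q \<ge> 1" and g: "gcd a q = 1" and n: "n > 0" and k: "k > 0" and L: "L > 0" and N: "N \<ge> 1"
    and LN: "real L \<le> N ^ n" and qLN: "real_of_int q \<le> real L * N ^ k" and N2: "2 ^ (n + k + 1) < N"
    and m: "0 < m" "m \<le> n" and r: "\<forall>i<m. 0 < r i" and rs: "(\<Sum>i<m. r i) = n"
  defines "P \<equiv> {p::nat. prime p \<and> N / 2 \<le> real p \<and> real p \<le> N \<and> \<not> int p dvd q}"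
  shows "(\<Sum>l = 1..L. norm (\<Sum>qs \<in> PiE {..<m} (\<lambda>_. P).
            e (real l * real (\<Prod>i<m. qs i ^ r i) * real_of_int a / real_of_int q)))^2
     \<le> 4 ^ n * real n ^ n * (4 * max ((real L)^2 * N ^ (n + k)) ((real L)^2 * N ^ (2*n) / real_of_int q))"
proof -
  have N4: "N \<ge> 4"
  proof -
    have "(2::real) ^ 2 \<le> 2 ^ (n + k + 1)" using n by (intro power_increasing) auto
    then show ?thesis using N2 by simp
  qed
  define Nf where "Nf = nat \<lfloor>N\<rfloor>"
  have NfN: "real Nf \<le> N" unfolding Nf_def using N by simp
  have Pp: "prime p" "p \<le> Nf" "N / 2 \<le> real p" "1 \<le> p" if "p \<in> P" for p
  proof -
    show "prime p" "N / 2 \<le> real p" using that unfolding P_def by auto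
    then show "1 \<le> p" using prime_gt_0_nat by (metis Suc_leI One_nat_def)
    have "real p \<le> N" using that unfolding P_def by auto
    then have "int p \<le> \<lfloor>N\<rfloor>" by (simp add: le_floor_iff)
    then show "p \<le> Nf" unfolding Nf_def by simp
  qed
  have PNf: "P \<subseteq> {1..Nf}" using Pp by auto
  have finP: "finite P" using PNf finite_subset by blast
  have cardP: "real (card P) \<le> N"
  proof -
    have "card P \<le> card {1..Nf}" by (rule card_mono[OF _ PNf]) simp
    then have "card P \<le> Nf" by simp
    then show ?thesis using NfN by linarith
  qed
  define S where "S j = (\<Sum>i<j. r i)" for j
  define j where "j = (LEAST j. m - k \<le> S j)"
  have Sm: "S m = n" unfolding S_def using rs by simp
  have ex: "m - k \<le> S m" using Sm m by simp
  have hj1: "m - k \<le> S j" unfolding j_def by (rule LeastI[of _ m]) (rule ex)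
  have hjm: "j \<le> m" unfolding j_def by (rule Least_le) (rule ex)
  have Smono: "S j \<le> S m" unfolding S_def using hjm by (intro sum_mono2) auto
  then have hS: "S j \<le> n" using Sm by simp
  have hcase: "S j = 0 \<or> S j + k \<le> n"
  proof (cases j)
    case 0 then show ?thesis unfolding S_def by simp
  next
    case (Suc j')
    have "\<not> m - k \<le> S j'" unfolding j_def
      by (rule not_less_Least) (use Suc in \<open>simp add: j_def\<close>)
    moreover have "S j = S j' + r j'" unfolding S_def Suc by simp
    moreover have "r j' + (m - 1) \<le> n" using r_le[of j' m r] r rs Suc hjm by simp
    ultimately show ?thesis by linarith
  qed
  define s where "s = S j"
  define X where "X = PiE {..<j} (\<lambda>_. P)"
  define Y where "Y = PiE {j..<m} (\<lambda>_. P)"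
  define xf where "xf t = (\<Prod>i<j. t i ^ r i)" for t :: "nat \<Rightarrow> nat"
  define yf where "yf u = (\<Prod>i\<in>{j..<m}. u i ^ r i)" for u :: "nat \<Rightarrow> nat"
  have sumY: "(\<Sum>i\<in>{j..<m}. r i) = n - s" using sum_split_r[OF hjm, of r] rs unfolding s_def S_def by simp
  have finX: "finite X" unfolding X_def using finP by (intro finite_PiE) auto
  have finY: "finite Y" unfolding Y_def using finP by (intro finite_PiE) auto
  have cardX: "card X = card P ^ j" unfolding X_def by (simp add: card_PiE)
  have cardY: "card Y = card P ^ (m - j)" unfolding Y_def by (simp add: card_PiE)
  have cop: "coprime a q" using g by (simp add: coprime_iff_gcd_eq_1)
  have xB: "\<forall>t\<in>X. xf t \<le> Nf ^ s"
  proof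
    fix t assume t: "t \<in> X"
    have "xf t \<le> (\<Prod>i<j. Nf ^ r i)" unfolding xf_def
      using t Pp unfolding X_def by (intro prod_mono) (auto intro: power_mono)
    also have "\<dots> = Nf ^ s" unfolding s_def S_def by (simp add: power_sum)
    finally show "xf t \<le> Nf ^ s" .
  qed
  have yB: "\<forall>u\<in>Y. 1 \<le> yf u \<and> yf u \<le> Nf ^ (n - s)"
  proof
    fix u assume u: "u \<in> Y"
    have "yf u \<le> (\<Prod>i\<in>{j..<m}. Nf ^ r i)" unfolding yf_def
      using u Pp unfolding Y_def by (intro prod_mono) (auto intro!: power_mono simp: PiE_iff)
    also have "\<dots> = Nf ^ (n - s)" by (simp only: power_sum[symmetric] sumY)
    finally have "yf u \<le> Nf ^ (n - s)" .
    moreover have "1 \<le> yf u" unfolding yf_def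
      using u Pp unfolding Y_def by (intro prod_ge_1) (auto simp: PiE_iff)
    ultimately show "1 \<le> yf u \<and> yf u \<le> Nf ^ (n - s)" by simp
  qed
  have fibx: "\<forall>v. card {t\<in>X. xf t = v} \<le> j ^ j"
  proof
    fix v
    show "card {t\<in>X. xf t = v} \<le> j ^ j"
    proof (cases "{t\<in>X. xf t = v} = {}")
      case True then show ?thesis by (simp only: card.empty zero_le)
    next
      case False
      then obtain t0 where t0: "t0 \<in> X" "xf t0 = v" by auto
      have sub: "{t\<in>X. xf t = v} \<subseteq> PiE {..<j} (\<lambda>_. t0 ` {..<j})"
      proof
        fix t assume t: "t \<in> {t\<in>X. xf t = v}"
        have "t i \<in> t0 ` {..<j}" if i: "i < j" for i
        proof -
          have "t i dvd xf t" unfolding xf_def by (rule dvd_tuple_prod) (use i r hjm in auto)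
          then have "t i dvd (\<Prod>k<j. t0 k ^ r k)" using t t0 unfolding xf_def by simp
          moreover have "prime (t i)" using t i Pp unfolding X_def by (auto simp: PiE_iff)
          moreover have "\<forall>k\<in>{..<j}. prime (t0 k)" using t0 Pp unfolding X_def by (auto simp: PiE_iff)
          ultimately have "\<exists>k\<in>{..<j}. t i = t0 k" by (intro prime_dvd_tuple) auto
          then show ?thesis by auto
        qed
        then show "t \<in> PiE {..<j} (\<lambda>_. t0 ` {..<j})" using t unfolding X_def by (auto simp: PiE_iff)
      qed
      have "card {t\<in>X. xf t = v} \<le> card (PiE {..<j} (\<lambda>_. t0 ` {..<j}))"
        by (rule card_mono[OF _ sub]) (auto intro: finite_PiE)
      also have "\<dots> = card (t0 ` {..<j}) ^ j" by (simp add: card_PiE)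
      also have "\<dots> \<le> j ^ j" by (rule power_mono) (auto intro: card_image_le[THEN order.trans])
      finally show ?thesis .
    qed
  qed
  have fiby: "\<forall>h. card {p \<in> {1..L} \<times> Y. fst p * yf (snd p) = h} \<le> (4*n) ^ (m - j)"
  proof
    fix h
    let ?T = "{p \<in> {1..L} \<times> Y. fst p * yf (snd p) = h}"
    show "card ?T \<le> (4*n) ^ (m - j)"
    proof (cases "?T = {}")
      case True then show ?thesis by (simp only: card.empty zero_le)
    next
      case False
      then obtain l0 u0 where l0: "1 \<le> l0" "l0 \<le> L" and u0: "u0 \<in> Y" and h: "h = l0 * yf u0" by auto
      have y0: "1 \<le> yf u0" "yf u0 \<le> Nf ^ (n - s)" using yB u0 by auto
      have hpos: "h > 0" using h l0 y0 by simp
      have hle: "real h \<le> N ^ (2*n)"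
      proof -
        have "real h \<le> real L * real (Nf ^ (n - s))" using h l0 y0
          by (simp only: of_nat_mult[symmetric] of_nat_le_iff) (intro mult_le_mono)
        also have "\<dots> \<le> N ^ n * N ^ n"
        proof (intro mult_mono)
          show "real (Nf ^ (n - s)) \<le> N ^ n"
          proof -
            have "real (Nf ^ (n - s)) \<le> N ^ (n - s)" using NfN by (simp add: power_mono)
            also have "\<dots> \<le> N ^ n" using N by (intro power_increasing) auto
            finally show ?thesis .
          qed
        qed (use LN N in auto)
        also have "\<dots> = N ^ (2*n)" by (simp add: power_add[symmetric] mult_2)
        finally show ?thesis .
      qed
      define D where "D = {p\<in>P. p dvd h}"
      have cardD: "card D \<le> 4 * n"
        by (rule card_big_primes[OF N4 _ _ hpos hle]) (use finP Pp in \<open>auto simp: D_def\<close>)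
      have inj: "inj_on snd ?T"
      proof (rule inj_onI)
        fix p p' assume p: "p \<in> ?T" and p': "p' \<in> ?T" and eq: "snd p = snd p'"
        have "fst p * yf (snd p) = fst p' * yf (snd p)" using p p' eq by auto
        moreover have "yf (snd p) \<ge> 1" using yB p by auto
        ultimately have "fst p = fst p'" by simp
        then show "p = p'" using eq by (simp add: prod_eq_iff)
      qed
      have sub: "snd ` ?T \<subseteq> PiE {j..<m} (\<lambda>_. D)"
      proof
        fix u assume "u \<in> snd ` ?T"
        then obtain p where p: "p \<in> ?T" and up: "u = snd p" by (rule imageE)
        then have u: "u \<in> Y" and hl: "fst p * yf u = h" by auto
        have "u i \<in> D" if i: "i \<in> {j..<m}" for i
        proof -
          have "u i dvd yf u" unfolding yf_def by (rule dvd_tuple_prod) (use i r in auto)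
          also have "yf u dvd h" using hl by (metis dvd_triv_right)
          finally show ?thesis using u i unfolding D_def Y_def by (auto simp: PiE_iff)
        qed
        then show "u \<in> PiE {j..<m} (\<lambda>_. D)" using u unfolding Y_def by (auto simp: PiE_iff)
      qed
      have "card ?T = card (snd ` ?T)" using card_image[OF inj] by simp
      also have "\<dots> \<le> card (PiE {j..<m} (\<lambda>_. D))"
        by (rule card_mono[OF _ sub]) (use finP in \<open>auto intro!: finite_PiE simp: D_def\<close>)
      also have "\<dots> = card D ^ (m - j)" by (simp add: card_PiE)
      also have "\<dots> \<le> (4*n) ^ (m - j)" using cardD by (rule power_mono) simp
      finally show ?thesis .
    qed
  qed
  define ee where "ee l z = e (real l * real z * real_of_int a / real_of_int q)" for l z :: nat
  have reidx: "(\<Sum>qs \<in> PiE {..<m} (\<lambda>_. P). ee l (\<Prod>i<m. qs i ^ r i))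
      = (\<Sum>p\<in>X\<times>Y. ee l (xf (fst p) * yf (snd p)))" for l
  proof -
    have "(\<Sum>qs \<in> PiE {..<m} (\<lambda>_. P). ee l (\<Prod>i<m. qs i ^ r i))
        = (\<Sum>p\<in>X\<times>Y. ee l (\<Prod>i<m. (\<lambda>i. if i < j then fst p i else snd p i) i ^ r i))"
      unfolding X_def Y_def by (rule sum.reindex_bij_betw[OF PiE_split_bij[OF hjm], symmetric])
    also have "\<dots> = (\<Sum>p\<in>X\<times>Y. ee l (xf (fst p) * yf (snd p)))"
      unfolding xf_def yf_def by (intro sum.cong refl) (simp add: prod_split_merge[OF hjm])
    finally show ?thesis .
  qed
  have bnd: "(\<Sum>l=1..L. norm (\<Sum>p\<in>X\<times>Y. e (real l * real (xf (fst p) * yf (snd p)) * real_of_int a / real_of_int q)))^2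
     \<le> real L * real (card Y) * real ((4*n) ^ (m - j)) * (real (L * Nf ^ (n - s)) + real_of_int q)
         * (real (card X) * real (j ^ j) * (real (Nf ^ s) / real_of_int q + 1))"
    by (rule bilinear[OF finX finY q cop xB yB fibx fiby])
  have c1: "real (card X) * real (card Y) \<le> N ^ m"
  proof -
    have "real (card X) * real (card Y) = real (card P) ^ m" unfolding cardX cardY using hjm
      by (simp add: power_add[symmetric])
    also have "\<dots> \<le> N ^ m" using cardP by (intro power_mono) auto
    finally show ?thesis .
  qed
  have c2: "real ((4*n) ^ (m - j)) * real (j ^ j) \<le> 4 ^ n * real n ^ n"
  proof -
    have "j ^ j \<le> (4*n) ^ j" using hjm m by (intro power_mono) auto
    then have "(4*n) ^ (m - j) * j ^ j \<le> (4*n) ^ (m - j) * (4*n) ^ j" by (intro mult_left_mono) auto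
    also have "\<dots> = (4*n) ^ (m - j + j)" by (simp only: power_add)
    also have "\<dots> = (4*n) ^ m" using hjm by (metis le_add_diff_inverse2)
    also have "\<dots> \<le> (4*n) ^ n" using m n by (intro power_increasing) auto
    finally have "(4*n) ^ (m - j) * j ^ j \<le> (4*n) ^ n" .
    then have "real ((4*n) ^ (m - j) * j ^ j) \<le> real ((4*n) ^ n)" by (simp only: of_nat_le_iff)
    then show ?thesis by (simp add: power_mult_distrib)
  qed
  have c3: "real (L * Nf ^ (n - s)) + real_of_int q \<le> real L * N ^ (n - s) + real_of_int q"
  proof -
    have "real (Nf ^ (n - s)) \<le> N ^ (n - s)" using NfN by (simp add: power_mono)
    then show ?thesis by (simp add: mult_left_mono)
  qed
  have c4: "real (Nf ^ s) / real_of_int q + 1 \<le> N ^ s / real_of_int q + 1"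
  proof -
    have "real (Nf ^ s) \<le> N ^ s" using NfN by (simp add: power_mono)
    then show ?thesis using q by (simp add: divide_right_mono)
  qed
  have qpos: "real_of_int q \<ge> 1" using q by simp
  have "real L * real (card Y) * real ((4*n) ^ (m - j)) * (real (L * Nf ^ (n - s)) + real_of_int q)
         * (real (card X) * real (j ^ j) * (real (Nf ^ s) / real_of_int q + 1))
      = (real ((4*n) ^ (m - j)) * real (j ^ j)) * ((real (card X) * real (card Y)) * (real L *
          ((real (L * Nf ^ (n - s)) + real_of_int q) * (real (Nf ^ s) / real_of_int q + 1))))"
    by (simp add: mult_ac)
  also have "\<dots> \<le> (4 ^ n * real n ^ n) * (N ^ m * (real L *
          ((real L * N ^ (n - s) + real_of_int q) * (N ^ s / real_of_int q + 1))))"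
  proof -
    have T: "real L * ((real (L * Nf ^ (n - s)) + real_of_int q) * (real (Nf ^ s) / real_of_int q + 1))
        \<le> real L * ((real L * N ^ (n - s) + real_of_int q) * (N ^ s / real_of_int q + 1))"
      by (rule mult_left_mono, rule mult_mono[OF c3 c4]) (use qpos N in auto)
    have T0: "0 \<le> real L * ((real (L * Nf ^ (n - s)) + real_of_int q) * (real (Nf ^ s) / real_of_int q + 1))"
      using qpos by simp
    have B: "(real (card X) * real (card Y)) * (real L *
          ((real (L * Nf ^ (n - s)) + real_of_int q) * (real (Nf ^ s) / real_of_int q + 1)))
        \<le> N ^ m * (real L * ((real L * N ^ (n - s) + real_of_int q) * (N ^ s / real_of_int q + 1)))"
      by (rule mult_mono[OF c1 T]) (use N T0 in auto)
    show ?thesis by (rule mult_mono[OF c2 B]) (use T0 in auto)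
  qed
  also have "\<dots> = (4 ^ n * real n ^ n) * (real L * N ^ m * (real L * N ^ (n - s) + real_of_int q) * (N ^ s / real_of_int q + 1))"
    by (simp add: mult_ac)
  also have "\<dots> \<le> (4 ^ n * real n ^ n) * (4 * max ((real L)^2 * N ^ (n + k)) ((real L)^2 * N ^ (2*n) / real_of_int q))"
  proof (rule mult_left_mono)
    show "real L * N ^ m * (real L * N ^ (n - s) + real_of_int q) * (N ^ s / real_of_int q + 1)
        \<le> 4 * max ((real L)^2 * N ^ (n + k)) ((real L)^2 * N ^ (2*n) / real_of_int q)"
      by (rule key) (use N L qpos qLN m hS hj1 hcase in \<open>auto simp: s_def\<close>)
  qed simp
  finally have fin: "(\<Sum>l=1..L. norm (\<Sum>p\<in>X\<times>Y. e (real l * real (xf (fst p) * yf (snd p)) * real_of_int a / real_of_int q)))^2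
     \<le> 4 ^ n * real n ^ n * (4 * max ((real L)^2 * N ^ (n + k)) ((real L)^2 * N ^ (2*n) / real_of_int q))"
    using bnd by simp
  show ?thesis using fin reidx unfolding ee_def by simp
qed

lemma final_ineq:
  fixes L N q :: real and n k :: nat and lhs M :: real
  assumes N: "N \<ge> 1" and L: "L \<ge> 0" and q: "q \<ge> 1" and n: "n \<ge> 1"
    and lhs0: "lhs \<ge> 0"
    and h: "lhs ^ 2 \<le> 4 ^ n * real n ^ n * (4 * max (L^2 * N ^ (n + k)) (L^2 * N ^ (2*n) / q))"
  shows "lhs \<le> 2 * 2 ^ (n + k) * real n ^ n *
            max (L * N powr (real n / 2 + real k / 2)) (L * N ^ n / sqrt q)"
proof -
  define A where "A = L * N powr (real n / 2 + real k / 2)"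
  define B where "B = L * N ^ n / sqrt q"
  define mx where "mx = max A B"
  have A0: "A \<ge> 0" unfolding A_def using L by simp
  have B0: "B \<ge> 0" unfolding B_def using L N q by simp
  have A2: "A^2 = L^2 * N ^ (n + k)"
  proof -
    have "(N powr (real n / 2 + real k / 2))^2 = N powr (real n / 2 + real k / 2) * N powr (real n / 2 + real k / 2)"
      by (simp add: power2_eq_square)
    also have "\<dots> = N powr (real n / 2 + real k / 2 + (real n / 2 + real k / 2))" by (simp only: powr_add)
    also have "\<dots> = N powr (real (n + k))" by (rule arg_cong[where f = "(powr) N"]) simp
    also have "\<dots> = N ^ (n + k)" by (rule powr_realpow) (use N in simp)
    finally show ?thesis unfolding A_def by (simp add: power_mult_distrib)
  qed
  have B2: "B^2 = L^2 * N ^ (2*n) / q"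
    unfolding B_def using q by (simp add: power_mult_distrib power_divide power_mult[symmetric] mult.commute)
  have mx0: "mx \<ge> 0" unfolding mx_def using A0 by simp
  have M: "max (L^2 * N ^ (n + k)) (L^2 * N ^ (2*n) / q) \<le> mx^2"
  proof -
    have "A^2 \<le> mx^2" unfolding mx_def using A0 by (intro power_mono) auto
    moreover have "B^2 \<le> mx^2" unfolding mx_def using B0 by (intro power_mono) auto
    ultimately show ?thesis using A2 B2 by simp
  qed
  have "lhs ^ 2 \<le> 4 ^ n * real n ^ n * (4 * mx^2)"
    using h M by (rule order.trans[OF _ mult_left_mono[OF mult_left_mono]]) auto
  also have "\<dots> \<le> 4 ^ (n + k) * (real n ^ n * real n ^ n) * (4 * mx^2)"
  proof (rule mult_right_mono[OF mult_mono])
    show "(4::real) ^ n \<le> 4 ^ (n + k)" by (intro power_increasing) auto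
    show "real n ^ n \<le> real n ^ n * real n ^ n"
    proof -
      have "1 \<le> real n ^ n" using n by simp
      then show ?thesis by (metis mult_cancel_left2 mult_left_mono of_nat_0_le_iff zero_le_power)
    qed
  qed (use mx0 in auto)
  also have "\<dots> = (2 * 2 ^ (n + k) * real n ^ n * mx)^2"
  proof -
    have f4: "(4::real) ^ (n + k) = 2 ^ (n + k) * 2 ^ (n + k)"
      by (simp flip: power_mult_distrib)
    show ?thesis by (simp add: f4 power_mult_distrib mult_ac power2_eq_square)
  qed
  finally have "lhs^2 \<le> (2 * 2 ^ (n + k) * real n ^ n * mx)^2" .
  then show ?thesis unfolding mx_def A_def B_def
    by (rule power2_le_imp_le) (use mx0 in \<open>simp add: mx_def A_def B_def\<close>)
qed

theorem lemma2:
  "\<exists>C::real. C > 0 \<and>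
    (\<forall>(a::int) (q::int) (n::nat) (k::nat) (L::nat) (N::real) (m::nat) (r::nat \<Rightarrow> nat).
      q \<ge> 1 \<longrightarrow> gcd a q = 1 \<longrightarrow>
      n > 0 \<longrightarrow> k > 0 \<longrightarrow> L > 0 \<longrightarrow> N \<ge> 1 \<longrightarrow>
      real L \<le> N ^ n \<longrightarrow> real_of_int q \<le> real L * N ^ k \<longrightarrow>
      2 ^ (n + k + 1) < N \<longrightarrow>
      0 < m \<longrightarrow> m \<le> n \<longrightarrow> (\<forall>i<m. 0 < r i) \<longrightarrow> (\<Sum>i<m. r i) = n \<longrightarrow>
      (let P = {p::nat. prime p \<and> N / 2 \<le> real p \<and> real p \<le> N \<and> \<not> int p dvd q} in
        (\<Sum>l = 1..L. norm (\<Sum>qs \<in> PiE {..<m} (\<lambda>_. P).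
            e (real l * real (\<Prod>i<m. qs i ^ r i) * real_of_int a / real_of_int q)))
        \<le> C * 2 ^ (n + k) * real n ^ n *
            max (real L * N powr (real n / 2 + real k / 2))
                (real L * N ^ n / sqrt (real_of_int q))))"
proof (intro exI[of _ 2] conjI allI impI)
  fix a q :: int and n k L m :: nat and N :: real and r :: "nat \<Rightarrow> nat"
  assume H: "q \<ge> 1" "gcd a q = 1" "n > 0" "k > 0" "L > 0" "N \<ge> 1" "real L \<le> N ^ n"
    "real_of_int q \<le> real L * N ^ k" "2 ^ (n + k + 1) < N" "0 < m" "m \<le> n" "\<forall>i<m. 0 < r i" "(\<Sum>i<m. r i) = n"
  show "let P = {p::nat. prime p \<and> N / 2 \<le> real p \<and> real p \<le> N \<and> \<not> int p dvd q} in
        (\<Sum>l = 1..L. norm (\<Sum>qs \<in> PiE {..<m} (\<lambda>_. P).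
            e (real l * real (\<Prod>i<m. qs i ^ r i) * real_of_int a / real_of_int q)))
        \<le> 2 * 2 ^ (n + k) * real n ^ n *
            max (real L * N powr (real n / 2 + real k / 2))
                (real L * N ^ n / sqrt (real_of_int q))"
    unfolding Let_def
    by (rule final_ineq[OF _ _ _ _ _ core[OF H]]) (use H in \<open>auto intro: sum_nonneg\<close>)
qed simp

end
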